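(* Let $X_1,\dots,X_n$ be i.i.d. positive-integer-valued random variables with order statistics $X_{1,n}\ge\dots\ge X_{n,n}$, and let $M_n=\min\big(n,\inf\{k:X_{k,n}\le k\}\big)$. Then: (i) $M_n$ is a self-bounded random variable (as a function of $X_1,\dots,X_n$); (ii) $\operatorname{var}(M_n)\le\mathbb E M_n$, and for all $\lambda\in\mathbb R$, $\log\mathbb E\big[e^{\lambda(M_n-\mathbb E M_n)}\big]\le\mathbb E M_n\,(e^\lambda-\lambda-1)$; (iii) for all $t>0$, $$\mathbb P\{M_n-\mathbb E M_n\ge t\}\le\exp\Big(-\frac{t^2}{2(\mathbb E M_n+t/3)}\Big),\qquad \mathbb P\{M_n-\mathbb E M_n\le -t\}\le\exp\Big(-\frac{t^2}{2\,\mathbb E M_n}\Big).$$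
   Context: A non-negative random variable $Z=g(X_1,\dots,X_n)$ is self-bounded if there exist measurable functions $g_i$ such that, with $Z_i=g_i(X_1,\dots,X_{i-1},X_{i+1},\dots,X_n)$, one has $0\le Z-Z_i\le1$ for each $i\le n$ and $\sum_{i=1}^n(Z-Z_i)\le Z$. The logarithm in (ii) is natural. *)

theory Defs
  imports "HOL-Probability.Probability"
begin

definition ord_stat :: "nat \<Rightarrow> (nat \<Rightarrow> nat) \<Rightarrow> nat \<Rightarrow> nat" where
  "ord_stat n x k = rev (sort (map x [0..<n])) ! (k - 1)"

definition Mn_fun :: "nat \<Rightarrow> (nat \<Rightarrow> nat) \<Rightarrow> nat" where
  "Mn_fun n x =
     (if \<exists>k. 1 \<le> k \<and> k \<le> n \<and> ord_stat n x k \<le> k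
      then min n (LEAST k. 1 \<le> k \<and> k \<le> n \<and> ord_stat n x k \<le> k)
      else n)"

text \<open>Self-boundedness of Z = g(x_0,...,x_{n-1}) for arguments ranging in S:
  there are functions g_i not depending on the i-th coordinate (this is enforced
  by evaluating them at x(i := undefined)) with 0 <= Z - Z_i <= 1 and
  sum_i (Z - Z_i) <= Z; also Z >= 0.  (All functions on the discrete space
  are measurable.)\<close>
definition self_bounded :: "nat \<Rightarrow> 'b set \<Rightarrow> ((nat \<Rightarrow> 'b) \<Rightarrow> real) \<Rightarrow> bool" where
  "self_bounded n S g \<longleftrightarrow>
     (\<exists>gi :: nat \<Rightarrow> (nat \<Rightarrow> 'b) \<Rightarrow> real.
        \<forall>x. (\<forall>j<n. x j \<in> S) \<longrightarrow>
           0 \<le> g x \<and>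
           (\<forall>i<n. 0 \<le> g x - gi i (x(i := undefined)) \<and> g x - gi i (x(i := undefined)) \<le> 1) \<and>
           (\<Sum>i<n. g x - gi i (x(i := undefined))) \<le> g x)"

end

theory Submission
  imports Defs "HOL-Probability.Probability"
begin

lemma sorted_le_iff:
  fixes s :: "nat list"
  assumes "sorted s" "i < length s"
  shows "(s!i \<le> k) \<longleftrightarrow> i < card {j. j < length s \<and> s!j \<le> k}"
proof
  assume h: "s!i \<le> k"
  have "{..i} \<subseteq> {j. j < length s \<and> s!j \<le> k}"
    using assms h by (auto intro: order_trans[OF sorted_nth_mono])
  from card_mono[OF _ this] show "i < card {j. j < length s \<and> s!j \<le> k}" by simp
next
  assume h: "i < card {j. j < length s \<and> s!j \<le> k}"
  show "s!i \<le> k"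
  proof (rule ccontr)
    assume "\<not> s!i \<le> k"
    then have "{j. j < length s \<and> s!j \<le> k} \<subseteq> {..<i}"
      using assms by (auto simp: not_le) (metis leI le_trans less_le_not_le sorted_nth_mono)
    from card_mono[OF _ this] h show False by simp
  qed
qed

definition cnt :: "nat \<Rightarrow> (nat \<Rightarrow> nat) \<Rightarrow> nat \<Rightarrow> nat" where
  "cnt n x k = card {j. j < n \<and> k < x j}"

lemma ord_stat_le_iff:
  assumes "1 \<le> k" "k \<le> n"
  shows "ord_stat n x k \<le> k \<longleftrightarrow> cnt n x k < k"
proof -
  let ?l = "map x [0..<n]"
  let ?s = "sort ?l"
  have len: "length ?s = n" by simp
  have "ord_stat n x k = ?s ! (n - k)"
    unfolding ord_stat_def using assms by (simp add: rev_nth Suc_diff_le)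
  moreover have "(?s ! (n - k) \<le> k) \<longleftrightarrow> n - k < card {j. j < length ?s \<and> ?s!j \<le> k}"
    by (rule sorted_le_iff) (use assms in auto)
  moreover have "card {j. j < length ?s \<and> ?s!j \<le> k} = length (filter (\<lambda>v. v \<le> k) ?s)"
    by (simp add: length_filter_conv_card)
  moreover have "\<dots> = length (filter (\<lambda>v. v \<le> k) ?l)"
    by (simp add: filter_sort)
  moreover have "\<dots> = card {j. j < n \<and> x j \<le> k}"
    unfolding length_filter_conv_card by (intro arg_cong[where f=card]) auto
  moreover have "card {j. j < n \<and> x j \<le> k} + cnt n x k = n"
  proof -
    have "{j. j < n \<and> x j \<le> k} \<union> {j. j < n \<and> k < x j} = {..<n}" by auto
    moreover have "card ({j. j < n \<and> x j \<le> k} \<union> {j. j < n \<and> k < x j}) =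
       card {j. j < n \<and> x j \<le> k} + card {j. j < n \<and> k < x j}"
      by (rule card_Un_disjoint) auto
    ultimately show ?thesis unfolding cnt_def by simp
  qed
  ultimately show ?thesis using assms by linarith
qed

definition Dset :: "nat \<Rightarrow> (nat \<Rightarrow> nat) \<Rightarrow> nat set" where
  "Dset n x = {k. 1 \<le> k \<and> k \<le> n \<and> k \<le> cnt n x k}"

lemma cnt_anti: "k \<le> k' \<Longrightarrow> cnt n x k' \<le> cnt n x k"
  unfolding cnt_def by (rule card_mono) auto

lemma cnt_le: "cnt n x k \<le> n"
  unfolding cnt_def by (rule order_trans[OF card_mono[of "{..<n}"]]) auto

lemma Dset_down: "k \<in> Dset n x \<Longrightarrow> 1 \<le> j \<Longrightarrow> j \<le> k \<Longrightarrow> j \<in> Dset n x"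
  unfolding Dset_def using cnt_anti[of j k n x] by auto

lemma Dset_eq: "Dset n x = {1..card (Dset n x)}"
proof (cases "Dset n x = {}")
  case True then show ?thesis by simp
next
  case False
  have fin: "finite (Dset n x)" by (rule finite_subset[of _ "{..n}"]) (auto simp: Dset_def)
  let ?m = "Max (Dset n x)"
  have "?m \<in> Dset n x" using Max_in[OF fin False] .
  then have "Dset n x = {1..?m}"
  proof (intro equalityI subsetI)
    fix k assume "k \<in> Dset n x"
    then show "k \<in> {1..?m}" using Max_ge[OF fin] by (auto simp: Dset_def)
  next
    fix k assume "k \<in> {1..?m}"
    then show "k \<in> Dset n x" using Dset_down[OF \<open>?m \<in> Dset n x\<close>, of k] by auto
  qed
  then obtain m where m: "Dset n x = {1..m}" by blast
  then show ?thesis by simp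
qed

lemma Mn_alt: "Mn_fun n x = min n (Suc (card (Dset n x)))"
proof -
  let ?h = "card (Dset n x)"
  have D: "Dset n x = {1..?h}" by (rule Dset_eq)
  have hn: "?h \<le> n"
  proof -
    have "Dset n x \<subseteq> {1..n}" unfolding Dset_def by auto
    from card_mono[OF _ this] show ?thesis by simp
  qed
  have P: "\<And>k. 1 \<le> k \<Longrightarrow> k \<le> n \<Longrightarrow> (ord_stat n x k \<le> k \<longleftrightarrow> \<not> k \<le> ?h)"
  proof -
    fix k assume k: "1 \<le> k" "k \<le> n"
    have "k \<le> ?h \<longleftrightarrow> k \<in> Dset n x" using D k by auto
    also have "\<dots> \<longleftrightarrow> k \<le> cnt n x k" using k unfolding Dset_def by auto
    finally show "(ord_stat n x k \<le> k \<longleftrightarrow> \<not> k \<le> ?h)"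
      using ord_stat_le_iff[OF k, of x] by auto
  qed
  show ?thesis
  proof (cases "?h < n")
    case True
    have ex: "\<exists>k. 1 \<le> k \<and> k \<le> n \<and> ord_stat n x k \<le> k"
      using P[of "Suc ?h"] True by (intro exI[of _ "Suc ?h"]) auto
    have "(LEAST k. 1 \<le> k \<and> k \<le> n \<and> ord_stat n x k \<le> k) = Suc ?h"
    proof (rule Least_equality)
      show "1 \<le> Suc ?h \<and> Suc ?h \<le> n \<and> ord_stat n x (Suc ?h) \<le> Suc ?h"
        using P[of "Suc ?h"] True by auto
    next
      fix y assume "1 \<le> y \<and> y \<le> n \<and> ord_stat n x y \<le> y"
      then show "Suc ?h \<le> y" using P[of y] by auto
    qed
    then show ?thesis unfolding Mn_fun_def using ex True by simp
  next
    case False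
    then have "?h = n" using hn by simp
    then have nex: "\<not> (\<exists>k. 1 \<le> k \<and> k \<le> n \<and> ord_stat n x k \<le> k)" using P by auto
    have "Mn_fun n x = n" using nex by (simp only: Mn_fun_def if_False)
    then show ?thesis using \<open>?h = n\<close> by simp
  qed
qed


lemma cnt_upd:
  assumes "i < n" "1 \<le> k"
  shows "cnt n (x(i:=1)) k + (if k < x i then 1 else 0) = cnt n x k"
proof -
  have eq: "{j. j < n \<and> k < (x(i:=1)) j} = {j. j < n \<and> k < x j} - {i}"
    using assms by auto
  have fin: "finite {j. j < n \<and> k < x j}" by simp
  have "i \<in> {j. j < n \<and> k < x j} \<Longrightarrow> card {j. j < n \<and> k < x j} > 0"
    using fin by (auto simp: card_gt_0_iff)
  then show ?thesis unfolding cnt_def eq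
    using assms by (cases "k < x i") (auto simp: card_Diff_singleton_if)
qed

lemma Dset_upd_sub: "i < n \<Longrightarrow> Dset n (x(i:=1)) \<subseteq> Dset n x"
proof
  fix k assume i: "i < n" and k: "k \<in> Dset n (x(i:=1))"
  then have "1 \<le> k" unfolding Dset_def by auto
  from cnt_upd[OF i this, of x] k show "k \<in> Dset n x" unfolding Dset_def by auto
qed

lemma Dset_upd_big:
  assumes "i < n"
  shows "{1..card (Dset n x) - 1} \<subseteq> Dset n (x(i:=1))"
proof
  fix k assume k: "k \<in> {1..card (Dset n x) - 1}"
  then have "Suc k \<in> Dset n x" using Dset_eq[of n x] by auto
  then have "Suc k \<le> cnt n x (Suc k)" "Suc k \<le> n" unfolding Dset_def by auto
  moreover have "cnt n x (Suc k) \<le> cnt n x k" by (rule cnt_anti) simp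
  moreover have "cnt n (x(i:=1)) k + (if k < x i then 1 else 0) = cnt n x k"
    using cnt_upd[OF assms, of k x] k by auto
  ultimately show "k \<in> Dset n (x(i:=1))" unfolding Dset_def using k
    by (auto split: if_splits)
qed

lemma Mn_upd:
  assumes "i < n"
  shows "Mn_fun n (x(i:=1)) \<le> Mn_fun n x \<and> Mn_fun n x \<le> Suc (Mn_fun n (x(i:=1)))"
proof -
  have fin: "finite (Dset n x)" by (rule finite_subset[of _ "{..n}"]) (auto simp: Dset_def)
  have "card (Dset n (x(i:=1))) \<le> card (Dset n x)"
    by (rule card_mono[OF fin Dset_upd_sub[OF assms]])
  moreover have "card (Dset n x) - 1 \<le> card (Dset n (x(i:=1)))"
  proof -
    have fin2: "finite (Dset n (x(i:=1)))" by (rule finite_subset[of _ "{..n}"]) (auto simp: Dset_def)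
    from card_mono[OF fin2 Dset_upd_big[OF assms]] show ?thesis by simp
  qed
  ultimately show ?thesis unfolding Mn_alt by auto
qed

lemma Mn_dec_card:
  "card {i. i < n \<and> Mn_fun n (x(i:=1)) < Mn_fun n x} \<le> Mn_fun n x"
proof -
  let ?A = "{i. i < n \<and> Mn_fun n (x(i:=1)) < Mn_fun n x}"
  let ?h = "card (Dset n x)"
  show ?thesis
  proof (cases "?A = {}")
    case True then show ?thesis by (metis card.empty zero_le)
  next
    case False
    then obtain i0 where i0: "i0 < n" "Mn_fun n (x(i0:=1)) < Mn_fun n x" by auto
    show ?thesis
    proof (cases "Mn_fun n x = n")
      case True
      have "card ?A \<le> card {..<n}" by (rule card_mono) auto
      then show ?thesis using True by simp
    next
      case False
      then have Mh: "Mn_fun n x = Suc ?h" "Suc ?h < n" unfolding Mn_alt by auto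
      have key: "\<And>i. i < n \<Longrightarrow> Mn_fun n (x(i:=1)) < Mn_fun n x \<Longrightarrow>
                   1 \<le> ?h \<and> ?h \<le> cnt n x ?h \<and> \<not> ?h \<le> cnt n (x(i:=1)) ?h"
      proof -
        fix i assume i: "i < n" "Mn_fun n (x(i:=1)) < Mn_fun n x"
        have h'lt: "card (Dset n (x(i:=1))) < ?h"
          using i(2) Mh unfolding Mn_alt by auto
        have D': "Dset n (x(i:=1)) = {1..card (Dset n (x(i:=1)))}" by (rule Dset_eq)
        have "?h \<notin> Dset n (x(i:=1))" using h'lt by (subst D') auto
        moreover have "?h \<in> Dset n x" using Dset_eq[of n x] h'lt by auto
        ultimately show "1 \<le> ?h \<and> ?h \<le> cnt n x ?h \<and> \<not> ?h \<le> cnt n (x(i:=1)) ?h"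
          unfolding Dset_def by auto
      qed
      have "cnt n x ?h = ?h"
        using key[OF i0] cnt_upd[OF i0(1), of ?h x] by (auto split: if_splits)
      have sub: "?A \<subseteq> {j. j < n \<and> ?h < x j}"
      proof
        fix i assume "i \<in> ?A"
        then have i: "i < n" "Mn_fun n (x(i:=1)) < Mn_fun n x" by auto
        show "i \<in> {j. j < n \<and> ?h < x j}"
          using key[OF i] cnt_upd[OF i(1), of ?h x] i(1) by (auto split: if_splits)
      qed
      have "card ?A \<le> cnt n x ?h" unfolding cnt_def by (rule card_mono[OF _ sub]) simp
      then show ?thesis using \<open>cnt n x ?h = ?h\<close> Mh by simp
    qed
  qed
qed

lemma Mn_sb_real:
  "(\<Sum>i<n. real (Mn_fun n x) - real (Mn_fun n (x(i:=1)))) \<le> real (Mn_fun n x)"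
proof -
  let ?A = "{i. i < n \<and> Mn_fun n (x(i:=1)) < Mn_fun n x}"
  have "(\<Sum>i<n. real (Mn_fun n x) - real (Mn_fun n (x(i:=1)))) \<le> (\<Sum>i<n. if i \<in> ?A then 1 else 0)"
  proof (rule sum_mono)
    fix i assume "i \<in> {..<n}"
    then show "real (Mn_fun n x) - real (Mn_fun n (x(i:=1))) \<le> (if i \<in> ?A then 1 else 0)"
      using Mn_upd[of i n x] by auto
  qed
  also have "\<dots> = real (card ?A)"
    by (simp add: sum.If_cases Int_def)
  also have "\<dots> \<le> real (Mn_fun n x)" using Mn_dec_card[of n x] by simp
  finally show ?thesis .
qed

lemma part_i: "self_bounded n {1..} (\<lambda>x. real (Mn_fun n x))"
  unfolding self_bounded_def
proof (rule exI[of _ "\<lambda>i y. real (Mn_fun n (y(i:=1)))"], intro allI impI)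
  fix x :: "nat \<Rightarrow> nat"
  have a: "\<forall>i<n. 0 \<le> real (Mn_fun n x) - real (Mn_fun n (x(i:=1))) \<and>
       real (Mn_fun n x) - real (Mn_fun n (x(i:=1))) \<le> 1"
  proof (intro allI impI)
    fix i assume "i < n"
    from Mn_upd[OF this, of x] show "0 \<le> real (Mn_fun n x) - real (Mn_fun n (x(i:=1))) \<and>
       real (Mn_fun n x) - real (Mn_fun n (x(i:=1))) \<le> 1" by auto
  qed
  show "0 \<le> real (Mn_fun n x) \<and>
        (\<forall>i<n. 0 \<le> real (Mn_fun n x) - real (Mn_fun n ((x(i := undefined))(i:=1))) \<and>
         real (Mn_fun n x) - real (Mn_fun n ((x(i := undefined))(i:=1))) \<le> 1) \<and>
        (\<Sum>i<n. real (Mn_fun n x) - real (Mn_fun n ((x(i := undefined))(i:=1)))) \<le> real (Mn_fun n x)"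
    using a Mn_sb_real[of n x] by simp
qed


fun Eprod :: "(nat \<Rightarrow> nat \<Rightarrow> real) \<Rightarrow> nat set \<Rightarrow> nat \<Rightarrow> ((nat \<Rightarrow> nat) \<Rightarrow> real) \<Rightarrow> real" where
  "Eprod p S 0 f = f (\<lambda>_. undefined)"
| "Eprod p S (Suc n) f = (\<Sum>v\<in>S. p n v * Eprod p S n (\<lambda>x. f (x(n:=v))))"

locale pm =
  fixes p :: "nat \<Rightarrow> nat \<Rightarrow> real" and S :: "nat set"
  assumes finS: "finite S" and pnn: "\<And>i v. v \<in> S \<Longrightarrow> 0 \<le> p i v"
    and psum: "\<And>i. (\<Sum>v\<in>S. p i v) = 1"
begin

abbreviation E where "E \<equiv> Eprod p S"

lemma S_ne: "S \<noteq> {}" using psum[of 0] by auto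

lemma SP_upd: "\<forall>j<n. x j \<in> S \<Longrightarrow> v \<in> S \<Longrightarrow> \<forall>j<Suc n. (x(n:=v)) j \<in> S"
  by (auto simp: less_Suc_eq)

lemma E_cong: "(\<And>x. \<forall>j<n. x j \<in> S \<Longrightarrow> f x = g x) \<Longrightarrow> E n f = E n g"
proof (induction n arbitrary: f g)
  case 0 then show ?case by simp
next
  case (Suc n)
  show ?case unfolding Eprod.simps
  proof (rule sum.cong[OF refl])
    fix v assume v: "v \<in> S"
    have "E n (\<lambda>x. f (x(n:=v))) = E n (\<lambda>x. g (x(n:=v)))"
    proof (rule Suc.IH)
      fix x assume "\<forall>j<n. x j \<in> S"
      from SP_upd[OF this v] show "f (x(n:=v)) = g (x(n:=v))" by (rule Suc.prems)
    qed
    then show "p n v * E n (\<lambda>x. f (x(n := v))) = p n v * E n (\<lambda>x. g (x(n := v)))" by simp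
  qed
qed

lemma E_lin: "E n (\<lambda>x. a * f x + b * g x) = a * E n f + b * E n g"
  by (induction n arbitrary: f g) (simp_all add: sum.distrib sum_distrib_left algebra_simps)

lemma E_const: "E n (\<lambda>_. c) = c"
  by (induction n) (simp_all add: sum_distrib_right[symmetric] psum)

lemma E_add: "E n (\<lambda>x. f x + g x) = E n f + E n g"
  using E_lin[of n 1 f 1 g] by simp

lemma E_cmult: "E n (\<lambda>x. c * f x) = c * E n f"
  using E_lin[of n c f 0 f] by simp

lemma E_diff: "E n (\<lambda>x. f x - g x) = E n f - E n g"
  using E_lin[of n 1 f "-1" g] by simp

lemma E_sum: "finite I \<Longrightarrow> E n (\<lambda>x. \<Sum>i\<in>I. f i x) = (\<Sum>i\<in>I. E n (f i))"
  by (induction I rule: finite_induct) (simp_all add: E_const E_add)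

lemma E_mono: "(\<And>x. \<forall>j<n. x j \<in> S \<Longrightarrow> f x \<le> g x) \<Longrightarrow> E n f \<le> E n g"
proof (induction n arbitrary: f g)
  case 0 then show ?case by simp
next
  case (Suc n)
  show ?case unfolding Eprod.simps
  proof (rule sum_mono)
    fix v assume v: "v \<in> S"
    have "E n (\<lambda>x. f (x(n:=v))) \<le> E n (\<lambda>x. g (x(n:=v)))"
    proof (rule Suc.IH)
      fix x assume "\<forall>j<n. x j \<in> S"
      from SP_upd[OF this v] show "f (x(n:=v)) \<le> g (x(n:=v))" by (rule Suc.prems)
    qed
    then show "p n v * E n (\<lambda>x. f (x(n := v))) \<le> p n v * E n (\<lambda>x. g (x(n := v)))"
      by (rule mult_left_mono) (rule pnn[OF v])
  qed
qed

lemma E_pos: "(\<And>x. \<forall>j<n. x j \<in> S \<Longrightarrow> 0 < f x) \<Longrightarrow> 0 < E n f"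
proof (induction n arbitrary: f)
  case 0 then show ?case by simp
next
  case (Suc n)
  have pos: "\<And>v. v \<in> S \<Longrightarrow> 0 < E n (\<lambda>x. f (x(n:=v)))"
  proof -
    fix v assume v: "v \<in> S"
    show "0 < E n (\<lambda>x. f (x(n:=v)))"
    proof (rule Suc.IH)
      fix x assume "\<forall>j<n. x j \<in> S"
      from SP_upd[OF this v] show "0 < f (x(n:=v))" by (rule Suc.prems)
    qed
  qed
  have "\<exists>v\<in>S. 0 < p n v"
  proof (rule ccontr)
    assume nex: "\<not> (\<exists>v\<in>S. 0 < p n v)"
    have "\<And>v. v \<in> S \<Longrightarrow> p n v = 0"
    proof -
      fix v assume "v \<in> S"
      then show "p n v = 0" using nex pnn[of v n] by force
    qed
    then have "(\<Sum>v\<in>S. p n v) = 0" by simp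
    then show False using psum[of n] by simp
  qed
  then obtain v0 where v0: "v0 \<in> S" "0 < p n v0" by blast
  show ?case unfolding Eprod.simps
    by (rule sum_pos2[OF finS v0(1)]) (use v0 pos pnn in \<open>auto intro: mult_nonneg_nonneg less_imp_le\<close>)
qed

lemma E_nonneg: "(\<And>x. \<forall>j<n. x j \<in> S \<Longrightarrow> 0 \<le> f x) \<Longrightarrow> 0 \<le> E n f"
  using E_mono[of n "\<lambda>_. 0" f] by (simp add: E_const)

lemma E_sq: "(E n f)\<^sup>2 \<le> E n (\<lambda>x. (f x)\<^sup>2)"
proof -
  define c where "c = E n f"
  have eq: "(\<lambda>x. (f x - c)\<^sup>2) = (\<lambda>x. ((f x)\<^sup>2 + (-2*c) * f x) + c\<^sup>2)"
    by (auto simp: power2_eq_square algebra_simps)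
  have "0 \<le> E n (\<lambda>x. (f x - c)\<^sup>2)" by (rule E_nonneg) simp
  also have "\<dots> = E n (\<lambda>x. (f x)\<^sup>2) - 2*c*c + c\<^sup>2"
  proof -
    have "E n (\<lambda>x. ((f x)\<^sup>2 + (-2*c) * f x) + c\<^sup>2) = E n (\<lambda>x. (f x)\<^sup>2 + (-2*c) * f x) + c\<^sup>2"
      using E_add[of n "\<lambda>x. (f x)\<^sup>2 + (-2*c) * f x" "\<lambda>_. c\<^sup>2"] E_const by simp
    also have "\<dots> = E n (\<lambda>x. (f x)\<^sup>2) + (-2*c) * c + c\<^sup>2"
      using E_lin[of n 1 "\<lambda>x. (f x)\<^sup>2" "-2*c" f] unfolding c_def by simp
    finally show ?thesis unfolding eq by simp
  qed
  finally show ?thesis unfolding c_def by (simp add: power2_eq_square)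
qed

lemma efron_stein:
  assumes "\<And>i x v. i < n \<Longrightarrow> \<forall>j<n. x j \<in> S \<Longrightarrow> v \<in> S \<Longrightarrow> g i (x(i:=v)) = g i x"
  shows "E n (\<lambda>x. (f x)\<^sup>2) - (E n f)\<^sup>2 \<le> (\<Sum>i<n. E n (\<lambda>x. (f x - g i x)\<^sup>2))"
  using assms
proof (induction n arbitrary: f g)
  case 0 show ?case by simp
next
  case (Suc n)
  define fv where "fv v = (\<lambda>x. f (x(n:=v)))" for v
  define gv where "gv v i = (\<lambda>x. g i (x(n:=v)))" for v i
  define a where "a v = E n (fv v)" for v
  define b where "b v = E n (gv v n)" for v
  define A where "A = (\<Sum>v\<in>S. p n v * a v)"
  have EA: "E (Suc n) f = A" by (simp add: A_def a_def fv_def)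
  have IH: "E n (\<lambda>x. (fv v x)\<^sup>2) - (a v)\<^sup>2 \<le> (\<Sum>i<n. E n (\<lambda>x. (fv v x - gv v i x)\<^sup>2))"
    if v: "v \<in> S" for v
    unfolding a_def
  proof (rule Suc.IH)
    fix i x u assume i: "i < n" and x: "\<forall>j<n. x j \<in> S" and u: "u \<in> S"
    have tw: "(x(i:=u))(n:=v) = (x(n:=v))(i:=u)" using i by (auto simp: fun_upd_twist)
    have inv: "g i ((x(n:=v))(i:=u)) = g i (x(n:=v))"
      by (rule Suc.prems[of i "x(n:=v)" u]) (use SP_upd[OF x v] i u in auto)
    show "gv v i (x(i:=u)) = gv v i x"
      unfolding gv_def tw by (rule inv)
  qed
  obtain v0 where v0: "v0 \<in> S" using S_ne by auto
  have bconst: "b v = b v0" if v: "v \<in> S" for v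
    unfolding b_def gv_def
  proof (rule E_cong)
    fix x assume x: "\<forall>j<n. x j \<in> S"
    have "g n ((x(n:=v0))(n:=v)) = g n (x(n:=v0))"
      by (rule Suc.prems[of n "x(n:=v0)" v]) (use SP_upd[OF x v0] v in auto)
    then show "g n (x(n := v)) = g n (x(n := v0))" by simp
  qed
  have L: "E (Suc n) (\<lambda>x. (f x)\<^sup>2) - (E (Suc n) f)\<^sup>2 =
     (\<Sum>v\<in>S. p n v * (E n (\<lambda>x. (fv v x)\<^sup>2) - (a v)\<^sup>2)) + ((\<Sum>v\<in>S. p n v * (a v)\<^sup>2) - A\<^sup>2)"
    unfolding EA by (simp add: fv_def sum_subtractf right_diff_distrib)
  have pe: "p n v * (a v - b v0)\<^sup>2 = p n v * (a v)\<^sup>2 + (-2*b v0) * (p n v * a v) + (b v0)\<^sup>2 * p n v" for v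
    by (simp add: power2_eq_square algebra_simps)
  have step2: "(\<Sum>v\<in>S. p n v * (a v)\<^sup>2) - A\<^sup>2 \<le> (\<Sum>v\<in>S. p n v * (a v - b v0)\<^sup>2)"
  proof -
    have "(\<Sum>v\<in>S. p n v * (a v - b v0)\<^sup>2) = (\<Sum>v\<in>S. p n v * (a v)\<^sup>2) + (-2*b v0) * A + (b v0)\<^sup>2"
      unfolding pe sum.distrib sum_distrib_left[symmetric] psum A_def by simp
    moreover have "0 \<le> (A - b v0)\<^sup>2" by simp
    ultimately show ?thesis by (simp add: power2_eq_square algebra_simps)
  qed
  have step3: "(a v - b v0)\<^sup>2 \<le> E n (\<lambda>x. (fv v x - gv v n x)\<^sup>2)" if v: "v \<in> S" for v
  proof -
    have "a v - b v0 = E n (\<lambda>x. fv v x - gv v n x)"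
      using bconst[OF v] unfolding a_def b_def E_diff by simp
    then show ?thesis using E_sq by simp
  qed
  have R1: "(\<Sum>v\<in>S. p n v * (E n (\<lambda>x. (fv v x)\<^sup>2) - (a v)\<^sup>2)) \<le>
      (\<Sum>v\<in>S. p n v * (\<Sum>i<n. E n (\<lambda>x. (fv v x - gv v i x)\<^sup>2)))"
    by (rule sum_mono, rule mult_left_mono[OF IH pnn])
  have R2: "(\<Sum>v\<in>S. p n v * (a v - b v0)\<^sup>2) \<le> (\<Sum>v\<in>S. p n v * E n (\<lambda>x. (fv v x - gv v n x)\<^sup>2))"
    by (rule sum_mono, rule mult_left_mono[OF step3 pnn])
  have eqi: "E (Suc n) (\<lambda>x. (f x - g i x)\<^sup>2) = (\<Sum>v\<in>S. p n v * E n (\<lambda>x. (fv v x - gv v i x)\<^sup>2))" for i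
    by (simp add: fv_def gv_def)
  have sw: "(\<Sum>v\<in>S. p n v * (\<Sum>i<n. E n (\<lambda>x. (fv v x - gv v i x)\<^sup>2))) = (\<Sum>i<n. E (Suc n) (\<lambda>x. (f x - g i x)\<^sup>2))"
    unfolding eqi sum_distrib_left by (rule sum.swap)
  show ?case using L R1 R2 step2 unfolding sw eqi[symmetric] by simp
qed

lemma ln_sum_pt:
  fixes f h a b :: real
  assumes "0 < f" "0 < h" "0 < a" "0 < b"
  shows "f * ln (a/b) + f - h * (a/b) \<le> f * ln (f/h)"
proof -
  have q: "0 < (h*a)/(f*b)" using assms by simp
  have "ln ((h*a)/(f*b)) \<le> (h*a)/(f*b) - 1" by (rule ln_le_minus_one[OF q])
  moreover have "ln ((h*a)/(f*b)) = ln h + ln a - ln f - ln b"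
    using assms by (simp add: ln_div ln_mult)
  ultimately have "f * (ln h + ln a - ln f - ln b) \<le> f * ((h*a)/(f*b) - 1)"
    using assms by (intro mult_left_mono) auto
  moreover have "f * ((h*a)/(f*b) - 1) = h * (a/b) - f" using assms by (simp add: field_simps)
  ultimately show ?thesis using assms by (simp add: ln_div algebra_simps)
qed

lemma log_sum:
  assumes fp: "\<And>x. \<forall>j<n. x j \<in> S \<Longrightarrow> 0 < f x" and hp: "\<And>x. \<forall>j<n. x j \<in> S \<Longrightarrow> 0 < h x"
  shows "E n f * ln (E n f / E n h) - E n f + E n h \<le> E n (\<lambda>x. f x * ln (f x / h x) - f x + h x)"
proof -
  define a where "a = E n f"
  define b where "b = E n h"
  have a: "0 < a" unfolding a_def by (rule E_pos[OF fp])
  have b: "0 < b" unfolding b_def by (rule E_pos[OF hp])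
  have "E n (\<lambda>x. f x * ln (a/b) + f x - h x * (a/b)) \<le> E n (\<lambda>x. f x * ln (f x / h x))"
    by (rule E_mono) (rule ln_sum_pt[OF fp hp a b])
  moreover have "E n (\<lambda>x. f x * ln (a/b) + f x - h x * (a/b)) = a * ln (a/b)"
  proof -
    have "E n (\<lambda>x. f x * ln (a/b) + f x - h x * (a/b)) = E n (\<lambda>x. (ln (a/b) + 1) * f x + (-(a/b)) * h x)"
      by (rule E_cong) (simp add: algebra_simps)
    also have "\<dots> = (ln (a/b) + 1) * a - (a/b) * b" unfolding E_lin a_def b_def by simp
    finally show ?thesis using b by (simp add: algebra_simps)
  qed
  moreover have "E n (\<lambda>x. f x * ln (f x / h x) - f x + h x) = E n (\<lambda>x. f x * ln (f x / h x)) - a + b"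
    unfolding E_add E_diff a_def b_def by simp
  ultimately show ?thesis unfolding a_def[symmetric] b_def[symmetric] by simp
qed

lemma entropy_tens:
  assumes "\<And>x. \<forall>j<n. x j \<in> S \<Longrightarrow> 0 < f x"
    and "\<And>i x. i < n \<Longrightarrow> \<forall>j<n. x j \<in> S \<Longrightarrow> 0 < g i x"
    and "\<And>i x v. i < n \<Longrightarrow> \<forall>j<n. x j \<in> S \<Longrightarrow> v \<in> S \<Longrightarrow> g i (x(i:=v)) = g i x"
  shows "E n (\<lambda>x. f x * ln (f x)) - E n f * ln (E n f)
     \<le> (\<Sum>i<n. E n (\<lambda>x. f x * ln (f x / g i x) - f x + g i x))"
  using assms
proof (induction n arbitrary: f g)
  case 0 show ?case by simp
next
  case (Suc n)
  define fv where "fv v = (\<lambda>x. f (x(n:=v)))" for v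
  define gv where "gv v i = (\<lambda>x. g i (x(n:=v)))" for v i
  define a where "a v = E n (fv v)" for v
  define b where "b v = E n (gv v n)" for v
  define A where "A = (\<Sum>v\<in>S. p n v * a v)"
  have EA: "E (Suc n) f = A" by (simp add: A_def a_def fv_def)
  have fvp: "0 < fv v x" if "v \<in> S" "\<forall>j<n. x j \<in> S" for v x
    unfolding fv_def by (rule Suc.prems(1)[OF SP_upd[OF that(2,1)]])
  have gvp: "0 < gv v i x" if "v \<in> S" "\<forall>j<n. x j \<in> S" "i < Suc n" for v x i
    unfolding gv_def by (rule Suc.prems(2)[OF that(3) SP_upd[OF that(2,1)]])
  have IH: "E n (\<lambda>x. fv v x * ln (fv v x)) - a v * ln (a v)
      \<le> (\<Sum>i<n. E n (\<lambda>x. fv v x * ln (fv v x / gv v i x) - fv v x + gv v i x))"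
    if v: "v \<in> S" for v
    unfolding a_def
  proof (rule Suc.IH)
    show "\<And>x. \<forall>j<n. x j \<in> S \<Longrightarrow> 0 < fv v x" using fvp[OF v] .
    show "\<And>i x. i < n \<Longrightarrow> \<forall>j<n. x j \<in> S \<Longrightarrow> 0 < gv v i x" using gvp[OF v] by simp
    fix i x u assume i: "i < n" and x: "\<forall>j<n. x j \<in> S" and u: "u \<in> S"
    have tw: "(x(i:=u))(n:=v) = (x(n:=v))(i:=u)" using i by (auto simp: fun_upd_twist)
    have inv: "g i ((x(n:=v))(i:=u)) = g i (x(n:=v))"
      by (rule Suc.prems(3)[of i "x(n:=v)" u]) (use SP_upd[OF x v] i u in auto)
    show "gv v i (x(i:=u)) = gv v i x"
      unfolding gv_def tw by (rule inv)
  qed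
  obtain v0 where v0: "v0 \<in> S" using S_ne by auto
  have bconst: "b v = b v0" if v: "v \<in> S" for v
    unfolding b_def gv_def
  proof (rule E_cong)
    fix x assume x: "\<forall>j<n. x j \<in> S"
    have "g n ((x(n:=v0))(n:=v)) = g n (x(n:=v0))"
      by (rule Suc.prems(3)[of n "x(n:=v0)" v]) (use SP_upd[OF x v0] v in auto)
    then show "g n (x(n := v)) = g n (x(n := v0))" by simp
  qed
  have apos: "0 < a v" if "v \<in> S" for v unfolding a_def by (rule E_pos) (rule fvp[OF that])
  have bpos: "0 < b v0" unfolding b_def by (rule E_pos) (rule gvp[OF v0], auto)
  have Apos: "0 < A" unfolding A_def[symmetric] EA[symmetric]
    by (rule E_pos) (rule Suc.prems(1))
  have L: "E (Suc n) (\<lambda>x. f x * ln (f x)) - E (Suc n) f * ln (E (Suc n) f) =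
     (\<Sum>v\<in>S. p n v * (E n (\<lambda>x. fv v x * ln (fv v x)) - a v * ln (a v))) +
     ((\<Sum>v\<in>S. p n v * (a v * ln (a v))) - A * ln A)"
    unfolding EA by (simp add: fv_def sum_subtractf right_diff_distrib)
  have step2: "(\<Sum>v\<in>S. p n v * (a v * ln (a v))) - A * ln A \<le>
      (\<Sum>v\<in>S. p n v * (a v * ln (a v / b v0) - a v + b v0))"
  proof -
    have pe: "p n v * (a v * ln (a v / b v0) - a v + b v0) =
        p n v * (a v * ln (a v)) + (-(ln (b v0) + 1)) * (p n v * a v) + b v0 * p n v" if "v \<in> S" for v
      using apos[OF that] bpos by (simp add: ln_div algebra_simps)
    have "(\<Sum>v\<in>S. p n v * (a v * ln (a v / b v0) - a v + b v0)) =
       (\<Sum>v\<in>S. p n v * (a v * ln (a v)) + (-(ln (b v0) + 1)) * (p n v * a v) + b v0 * p n v)"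
      by (rule sum.cong[OF refl pe])
    also have "\<dots> = (\<Sum>v\<in>S. p n v * (a v * ln (a v))) + (-(ln (b v0) + 1)) * A + b v0"
      unfolding sum.distrib sum_distrib_left[symmetric] psum A_def by simp
    finally have "(\<Sum>v\<in>S. p n v * (a v * ln (a v / b v0) - a v + b v0)) =
       (\<Sum>v\<in>S. p n v * (a v * ln (a v))) + (-(ln (b v0) + 1)) * A + b v0" .
    moreover have "A * ln (b v0) - A * ln A \<le> b v0 - A"
    proof -
      have "ln (b v0 / A) \<le> b v0 / A - 1" by (rule ln_le_minus_one) (use bpos Apos in simp)
      then have "A * ln (b v0 / A) \<le> A * (b v0 / A - 1)" using Apos by (intro mult_left_mono) auto
      moreover have "A * (b v0 / A - 1) = b v0 - A" using Apos by (simp add: field_simps)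
      moreover have "ln (b v0 / A) = ln (b v0) - ln A" using Apos bpos by (simp add: ln_div)
      ultimately show ?thesis by (simp add: right_diff_distrib)
    qed
    ultimately show ?thesis by (simp add: algebra_simps)
  qed
  have step3: "a v * ln (a v / b v0) - a v + b v0 \<le>
       E n (\<lambda>x. fv v x * ln (fv v x / gv v n x) - fv v x + gv v n x)" if v: "v \<in> S" for v
    using log_sum[of n "fv v" "gv v n"] fvp[OF v] gvp[OF v] bconst[OF v]
    unfolding a_def b_def by simp
  have R1: "(\<Sum>v\<in>S. p n v * (E n (\<lambda>x. fv v x * ln (fv v x)) - a v * ln (a v))) \<le>
      (\<Sum>v\<in>S. p n v * (\<Sum>i<n. E n (\<lambda>x. fv v x * ln (fv v x / gv v i x) - fv v x + gv v i x)))"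
    by (rule sum_mono, rule mult_left_mono[OF IH pnn])
  have R2: "(\<Sum>v\<in>S. p n v * (a v * ln (a v / b v0) - a v + b v0)) \<le>
      (\<Sum>v\<in>S. p n v * E n (\<lambda>x. fv v x * ln (fv v x / gv v n x) - fv v x + gv v n x))"
    by (rule sum_mono, rule mult_left_mono[OF step3 pnn])
  have eqi: "E (Suc n) (\<lambda>x. f x * ln (f x / g i x) - f x + g i x) =
     (\<Sum>v\<in>S. p n v * E n (\<lambda>x. fv v x * ln (fv v x / gv v i x) - fv v x + gv v i x))" for i
    by (simp add: fv_def gv_def)
  have sw: "(\<Sum>v\<in>S. p n v * (\<Sum>i<n. E n (\<lambda>x. fv v x * ln (fv v x / gv v i x) - fv v x + gv v i x))) =
      (\<Sum>i<n. E (Suc n) (\<lambda>x. f x * ln (f x / g i x) - f x + g i x))"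
    unfolding eqi sum_distrib_left by (rule sum.swap)
  show ?case using L R1 R2 step2 unfolding sw eqi[symmetric] by simp
qed

end

lemma nonneg_from_deriv:
  fixes f :: "real \<Rightarrow> real"
  assumes "\<And>x. 0 \<le> x \<Longrightarrow> (f has_real_derivative f' x) (at x)"
    and "\<And>x. 0 \<le> x \<Longrightarrow> 0 \<le> f' x" and "0 \<le> f 0" and "0 \<le> y"
  shows "0 \<le> f y"
proof -
  have "f 0 \<le> f y"
    by (rule DERIV_nonneg_imp_nondecreasing[OF assms(4)]) (use assms(1,2) in blast)
  then show ?thesis using assms(3) by simp
qed

lemma phi_lower:
  fixes s :: real assumes "0 \<le> s"
  shows "exp (-s) + s - 1 \<le> s\<^sup>2 / 2"
proof -
  have "0 \<le> s\<^sup>2 / 2 - exp (-s) - s + 1"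
  proof (rule nonneg_from_deriv[where f = "\<lambda>s. s\<^sup>2 / 2 - exp (-s) - s + 1" and y = s])
    fix x :: real assume "0 \<le> x"
    show "((\<lambda>s. s\<^sup>2 / 2 - exp (-s) - s + 1) has_real_derivative (x + exp (-x) - 1)) (at x)"
      by (auto intro!: derivative_eq_intros simp: field_simps)
    show "0 \<le> x + exp (-x) - 1" using exp_ge_add_one_self[of "-x"] by simp
  qed (use assms in auto)
  then show ?thesis by simp
qed

lemma phi_upper:
  fixes l :: real assumes "0 \<le> l" "l < 3"
  shows "exp l - l - 1 \<le> l\<^sup>2 / (2 * (1 - l / 3))"
proof -
  have m: "0 \<le> 1 - exp x + x * exp x" if "0 \<le> x" for x :: real
  proof (rule nonneg_from_deriv[where f = "\<lambda>x. 1 - exp x + x * exp x" and y = x])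
    fix y :: real assume "0 \<le> y"
    show "((\<lambda>x. 1 - exp x + x * exp x) has_real_derivative (y * exp y)) (at y)"
      by (auto intro!: derivative_eq_intros simp: field_simps)
    show "0 \<le> y * exp y" using \<open>0 \<le> y\<close> by simp
  qed (use that in auto)
  have k': "0 \<le> 2*x + (2/3)*(exp x - x - 1) - (2 - 2*x/3)*(exp x - 1)" if "0 \<le> x" for x :: real
  proof (rule nonneg_from_deriv[where f = "\<lambda>x. 2*x + (2/3)*(exp x - x - 1) - (2 - 2*x/3)*(exp x - 1)" and y = x])
    fix y :: real assume "0 \<le> y"
    show "((\<lambda>x. 2*x + (2/3)*(exp x - x - 1) - (2 - 2*x/3)*(exp x - 1)) has_real_derivative
       ((2/3) * (1 - exp y + y * exp y))) (at y)"
      by (auto intro!: derivative_eq_intros simp: field_simps)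
    show "0 \<le> (2/3) * (1 - exp y + y * exp y)" using m[OF \<open>0 \<le> y\<close>] by simp
  qed (use that in auto)
  have k: "0 \<le> x\<^sup>2 - (2 - 2*x/3)*(exp x - x - 1)" if "0 \<le> x" for x :: real
  proof (rule nonneg_from_deriv[where f = "\<lambda>x. x\<^sup>2 - (2 - 2*x/3)*(exp x - x - 1)" and y = x])
    fix y :: real assume "0 \<le> y"
    show "((\<lambda>x. x\<^sup>2 - (2 - 2*x/3)*(exp x - x - 1)) has_real_derivative
       (2*y + (2/3)*(exp y - y - 1) - (2 - 2*y/3)*(exp y - 1))) (at y)"
      by (auto intro!: derivative_eq_intros simp: field_simps)
    show "0 \<le> 2*y + (2/3)*(exp y - y - 1) - (2 - 2*y/3)*(exp y - 1)" by (rule k'[OF \<open>0 \<le> y\<close>])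
  qed (use that in auto)
  have pos: "0 < 2 * (1 - l / 3)" using assms by simp
  have "(exp l - l - 1) * (2 * (1 - l / 3)) \<le> l\<^sup>2" using k[OF assms(1)] by (simp add: algebra_simps)
  then show ?thesis using pos by (simp add: field_simps)
qed

lemma exp_mix:
  fixes d y :: real assumes "0 \<le> d" "d \<le> 1"
  shows "exp (y * d) \<le> 1 - d + d * exp y"
  using convex_onD[OF exp_convex, of d 0 y] assms by (simp add: mult.commute)


context pm begin

lemma E_var: "E n (\<lambda>x. (f x - E n f)\<^sup>2) = E n (\<lambda>x. (f x)\<^sup>2) - (E n f)\<^sup>2"
proof -
  define c where "c = E n f"
  have eq: "(\<lambda>x. (f x - c)\<^sup>2) = (\<lambda>x. ((f x)\<^sup>2 + (-2*c) * f x) + c\<^sup>2)"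
    by (auto simp: power2_eq_square algebra_simps)
  have "E n (\<lambda>x. ((f x)\<^sup>2 + (-2*c) * f x) + c\<^sup>2) = E n (\<lambda>x. (f x)\<^sup>2 + (-2*c) * f x) + c\<^sup>2"
    using E_add[of n "\<lambda>x. (f x)\<^sup>2 + (-2*c) * f x" "\<lambda>_. c\<^sup>2"] E_const by simp
  also have "\<dots> = E n (\<lambda>x. (f x)\<^sup>2) + (-2*c) * c + c\<^sup>2"
    using E_lin[of n 1 "\<lambda>x. (f x)\<^sup>2" "-2*c" f] unfolding c_def by simp
  finally show ?thesis unfolding eq c_def[symmetric] by (simp add: power2_eq_square)
qed

lemma E_deriv:
  assumes "\<And>x. ((\<lambda>l. f l x) has_real_derivative f' x) (at l)"
  shows "((\<lambda>l. E n (f l)) has_real_derivative E n f') (at l)"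
  using assms
proof (induction n arbitrary: f f')
  case 0 then show ?case by simp
next
  case (Suc n)
  have d: "((\<lambda>l. E n (\<lambda>x. f l (x(n:=v)))) has_real_derivative E n (\<lambda>x. f' (x(n:=v)))) (at l)" for v
    by (rule Suc.IH) (rule Suc.prems)
  show ?case unfolding Eprod.simps
    by (rule DERIV_sum) (rule DERIV_cmult[OF d])
qed

end

locale sbf = pm +
  fixes n :: nat and Z :: "(nat \<Rightarrow> nat) \<Rightarrow> real" and W :: "nat \<Rightarrow> (nat \<Rightarrow> nat) \<Rightarrow> real"
  assumes sb1: "\<And>x i. \<forall>j<n. x j \<in> S \<Longrightarrow> i < n \<Longrightarrow> 0 \<le> Z x - W i x \<and> Z x - W i x \<le> 1"
    and sb2: "\<And>x. \<forall>j<n. x j \<in> S \<Longrightarrow> (\<Sum>i<n. Z x - W i x) \<le> Z x"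
    and winv: "\<And>i x v. i < n \<Longrightarrow> \<forall>j<n. x j \<in> S \<Longrightarrow> v \<in> S \<Longrightarrow> W i (x(i:=v)) = W i x"
begin

lemma Z_nonneg: "\<forall>j<n. x j \<in> S \<Longrightarrow> 0 \<le> Z x"
  using sb2[of x] sum_nonneg[of "{..<n}" "\<lambda>i. Z x - W i x"] sb1[of x] by force

lemma var_bound: "E n (\<lambda>x. (Z x - E n Z)\<^sup>2) \<le> E n Z"
proof -
  have "E n (\<lambda>x. (Z x - E n Z)\<^sup>2) \<le> (\<Sum>i<n. E n (\<lambda>x. (Z x - W i x)\<^sup>2))"
    unfolding E_var by (rule efron_stein) (rule winv)
  also have "\<dots> \<le> (\<Sum>i<n. E n (\<lambda>x. Z x - W i x))"
  proof (rule sum_mono, rule E_mono)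
    fix i x assume "i \<in> {..<n}" "\<forall>j<n. x j \<in> S"
    then have "0 \<le> Z x - W i x" "Z x - W i x \<le> 1" using sb1 by auto
    then have "(Z x - W i x) * (Z x - W i x) \<le> (Z x - W i x) * 1"
      by (intro mult_left_mono) auto
    then show "(Z x - W i x)\<^sup>2 \<le> Z x - W i x"
      by (simp add: power2_eq_square)
  qed
  also have "\<dots> = E n (\<lambda>x. \<Sum>i<n. Z x - W i x)" by (simp add: E_sum)
  also have "\<dots> \<le> E n Z" by (rule E_mono) (rule sb2)
  finally show ?thesis .
qed

definition F where "F l = E n (\<lambda>x. exp (l * Z x))"
definition F' where "F' l = E n (\<lambda>x. Z x * exp (l * Z x))"

lemma F_pos: "0 < F l" unfolding F_def by (rule E_pos) simp

lemma F_deriv: "(F has_real_derivative F' l) (at l)"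
  unfolding F_def[abs_def] F'_def
  by (rule E_deriv) (auto intro!: derivative_eq_intros)

lemma F0: "F 0 = 1" unfolding F_def by (simp add: E_const)
lemma F'0: "F' 0 = E n Z" unfolding F'_def by simp

lemma ent_pt:
  fixes l z d :: real
  assumes "0 \<le> d" "d \<le> 1"
  shows "exp (l*z) * ln (exp (l*z) / exp (l*(z - d))) - exp (l*z) + exp (l*(z - d))
     \<le> (exp (-l) + l - 1) * d * exp (l*z)"
proof -
  have "exp (l*z) / exp (l*(z - d)) = exp (l*z - l*(z-d))" by (rule exp_diff[symmetric])
  also have "l*z - l*(z-d) = l*d" by (simp add: algebra_simps)
  finally have e1: "ln (exp (l*z) / exp (l*(z - d))) = l * d" by simp
  have e2: "exp (l*(z - d)) = exp (l*z) * exp ((-l) * d)"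
    by (simp add: exp_add[symmetric] algebra_simps)
  have "exp ((-l) * d) \<le> 1 - d + d * exp (-l)" by (rule exp_mix[OF assms])
  then have "exp (l*z) * exp ((-l) * d) \<le> exp (l*z) * (1 - d + d * exp (-l))"
    by (rule mult_left_mono) simp
  then show ?thesis unfolding e1 unfolding e2 by (simp add: algebra_simps)
qed

lemma ent_bound:
  "l * F' l - F l * ln (F l) \<le> (exp (-l) + l - 1) * F' l"
proof -
  have "E n (\<lambda>x. exp (l * Z x) * ln (exp (l * Z x))) - E n (\<lambda>x. exp (l * Z x)) * ln (E n (\<lambda>x. exp (l * Z x)))
     \<le> (\<Sum>i<n. E n (\<lambda>x. exp (l * Z x) * ln (exp (l * Z x) / exp (l * W i x)) - exp (l * Z x) + exp (l * W i x)))"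
    by (rule entropy_tens) (auto intro: winv)
  also have "\<dots> \<le> (\<Sum>i<n. E n (\<lambda>x. (exp (-l) + l - 1) * (Z x - W i x) * exp (l * Z x)))"
  proof (rule sum_mono, rule E_mono)
    fix i x assume "i \<in> {..<n}" "\<forall>j<n. x j \<in> S"
    then have d: "0 \<le> Z x - W i x" "Z x - W i x \<le> 1" using sb1 by auto
    have "W i x = Z x - (Z x - W i x)" by simp
    then show "exp (l * Z x) * ln (exp (l * Z x) / exp (l * W i x)) - exp (l * Z x) + exp (l * W i x)
        \<le> (exp (-l) + l - 1) * (Z x - W i x) * exp (l * Z x)"
      using ent_pt[OF d, of l "Z x"] by metis
  qed
  also have "\<dots> = E n (\<lambda>x. \<Sum>i<n. (exp (-l) + l - 1) * (Z x - W i x) * exp (l * Z x))"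
    by (simp add: E_sum)
  also have "\<dots> \<le> E n (\<lambda>x. (exp (-l) + l - 1) * (Z x * exp (l * Z x)))"
  proof (rule E_mono)
    fix x assume x: "\<forall>j<n. x j \<in> S"
    have psi: "0 \<le> exp (-l) + l - 1" using exp_ge_add_one_self[of "-l"] by simp
    have "(\<Sum>i<n. (exp (-l) + l - 1) * (Z x - W i x) * exp (l * Z x))
        = (\<Sum>i<n. ((exp (-l) + l - 1) * exp (l * Z x)) * (Z x - W i x))"
      by (rule sum.cong) (simp_all add: mult_ac)
    also have "\<dots> = ((exp (-l) + l - 1) * exp (l * Z x)) * (\<Sum>i<n. Z x - W i x)"
      by (rule sum_distrib_left[symmetric])
    also have "\<dots> \<le> ((exp (-l) + l - 1) * exp (l * Z x)) * Z x"
      by (rule mult_left_mono[OF sb2[OF x]]) (use psi in simp)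
    finally show "(\<Sum>i<n. (exp (-l) + l - 1) * (Z x - W i x) * exp (l * Z x))
        \<le> (exp (-l) + l - 1) * (Z x * exp (l * Z x))" by (simp add: algebra_simps)
  qed
  also have "\<dots> = (exp (-l) + l - 1) * F' l" unfolding E_cmult F'_def ..
  finally have *: "E n (\<lambda>x. exp (l * Z x) * ln (exp (l * Z x))) - F l * ln (F l) \<le> (exp (-l) + l - 1) * F' l"
    unfolding F_def .
  have "E n (\<lambda>x. exp (l * Z x) * ln (exp (l * Z x))) = l * F' l"
    unfolding F'_def E_cmult[symmetric] by (simp add: algebra_simps)
  then show ?thesis using * by simp
qed

end

context sbf begin

lemma diff_ineq: "(1 - exp (-l)) * F' l \<le> F l * ln (F l)"
  using ent_bound[of l] by (simp add: algebra_simps)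

definition q where "q l = ln (F l) / (exp l - 1)"

lemma L_deriv: "((\<lambda>l. ln (F l)) has_real_derivative (F' l / F l)) (at l)"
  using F_deriv[of l] F_pos[of l] by (auto intro!: derivative_eq_intros simp: field_simps)

lemma q_deriv:
  assumes "l \<noteq> 0"
  shows "(q has_real_derivative ((F' l / F l) * (exp l - 1) - ln (F l) * exp l) / (exp l - 1)\<^sup>2) (at l)"
proof -
  have ne: "exp l - 1 \<noteq> 0" using assms by simp
  have "((\<lambda>l. ln (F l) / (exp l - 1)) has_real_derivative
         ((F' l / F l) * (exp l - 1) - ln (F l) * exp l) / ((exp l - 1) * (exp l - 1))) (at l)"
  proof (rule DERIV_divide[OF L_deriv])
    show "((\<lambda>l. exp l - 1) has_real_derivative exp l) (at l)"
      by (auto intro!: derivative_eq_intros)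
  qed (rule ne)
  then show ?thesis unfolding q_def[abs_def] by (simp add: power2_eq_square)
qed

lemma q_deriv_nonpos:
  assumes "l \<noteq> 0"
  shows "((F' l / F l) * (exp l - 1) - ln (F l) * exp l) / (exp l - 1)\<^sup>2 \<le> 0"
proof -
  have Fp: "0 < F l" by (rule F_pos)
  have h1: "exp l * ((1 - exp (-l)) * F' l) \<le> exp l * (F l * ln (F l))"
    using diff_ineq[of l] by (rule mult_left_mono) simp
  have e: "exp l * (1 - exp (-l)) = exp l - 1" by (simp add: exp_minus right_diff_distrib)
  have h2: "exp l * ((1 - exp (-l)) * F' l) = (exp l - 1) * F' l"
    using e by (simp add: mult.assoc[symmetric])
  have h3: "(F' l / F l) * (exp l - 1) - ln (F l) * exp l = ((exp l - 1) * F' l - exp l * (F l * ln (F l))) / F l"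
    using Fp by (simp add: field_simps)
  have "(F' l / F l) * (exp l - 1) - ln (F l) * exp l \<le> 0"
    unfolding h3 using h1 h2 Fp by (simp add: divide_nonpos_pos)
  then show ?thesis by (simp add: divide_nonpos_nonneg)
qed

lemma q_lim: "(q \<longlongrightarrow> E n Z) (at 0)"
proof -
  have L0: "ln (F 0) = 0" using F0 by simp
  have "((\<lambda>l. ln (F l)) has_real_derivative E n Z) (at 0)"
    using L_deriv[of 0] F0 F'0 by simp
  then have t1: "((\<lambda>y. (ln (F y) - ln (F 0)) / (y - 0)) \<longlongrightarrow> E n Z) (at 0)"
    by (simp only: has_field_derivative_iff)
  have "(exp has_real_derivative 1) (at (0::real))" using DERIV_exp[of 0] by simp
  then have t2: "((\<lambda>y. (exp y - exp 0) / (y - 0)) \<longlongrightarrow> (1::real)) (at 0)"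
    by (simp only: has_field_derivative_iff)
  have t3: "((\<lambda>y. ((ln (F y) - ln (F 0)) / (y - 0)) * inverse ((exp y - exp 0) / (y - 0)))
      \<longlongrightarrow> E n Z * inverse 1) (at (0::real))"
    by (intro tendsto_mult tendsto_inverse t1 t2) simp
  have t3': "((\<lambda>y. ((ln (F y) - ln (F 0)) / (y - 0)) * inverse ((exp y - exp 0) / (y - 0)))
      \<longlongrightarrow> E n Z) (at (0::real))" using t3 by simp
  have ev: "eventually (\<lambda>y::real. y \<noteq> 0) (at 0)" by (simp add: eventually_at_filter)
  show ?thesis
  proof (rule Lim_transform_eventually[OF t3'])
    show "\<forall>\<^sub>F x in at 0. (ln (F x) - ln (F 0)) / (x - 0) * inverse ((exp x - exp 0) / (x - 0)) = q x"
      using ev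
    proof (rule eventually_mono)
      fix y :: real assume y: "y \<noteq> 0"
      then have "exp y - 1 \<noteq> 0" by simp
      then show "(ln (F y) - ln (F 0)) / (y - 0) * inverse ((exp y - exp 0) / (y - 0)) = q y"
        using y L0 unfolding q_def by (simp add: field_simps)
    qed
  qed
qed

lemma herbst_L: "ln (F l) \<le> E n Z * (exp l - 1)"
proof (cases "l = 0")
  case True then show ?thesis using F0 by simp
next
  case False
  show ?thesis
  proof (cases "0 < l")
    case True
    have mono: "q l \<le> q y" if "0 < y" "y \<le> l" for y
    proof (rule DERIV_nonpos_imp_nonincreasing[OF that(2)])
      fix x assume "y \<le> x" "x \<le> l"
      then have "x \<noteq> 0" using that by auto
      then show "\<exists>d. (q has_real_derivative d) (at x) \<and> d \<le> 0"
        using q_deriv q_deriv_nonpos by blast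
    qed
    have lim: "(q \<longlongrightarrow> E n Z) (at_right 0)"
      by (rule tendsto_within_subset[OF q_lim]) simp
    have "q l \<le> E n Z"
    proof (rule tendsto_lowerbound[OF lim])
      show "\<forall>\<^sub>F i in at_right 0. q l \<le> q i"
        by (rule eventually_at_rightI[of 0 l]) (use mono True in auto)
    qed simp
    moreover have "0 < exp l - 1" using True by simp
    ultimately have "q l * (exp l - 1) \<le> E n Z * (exp l - 1)" by (metis less_imp_le mult_right_mono)
    then show ?thesis unfolding q_def using \<open>0 < exp l - 1\<close> by simp
  next
    case False
    then have neg: "l < 0" using \<open>l \<noteq> 0\<close> by simp
    have mono: "q y \<le> q l" if "l \<le> y" "y < 0" for y
    proof (rule DERIV_nonpos_imp_nonincreasing[OF that(1)])
      fix x assume "l \<le> x" "x \<le> y"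
      then have "x \<noteq> 0" using that by auto
      then show "\<exists>d. (q has_real_derivative d) (at x) \<and> d \<le> 0"
        using q_deriv q_deriv_nonpos by blast
    qed
    have lim: "(q \<longlongrightarrow> E n Z) (at_left 0)"
      by (rule tendsto_within_subset[OF q_lim]) simp
    have "E n Z \<le> q l"
    proof (rule tendsto_upperbound[OF lim])
      show "\<forall>\<^sub>F i in at_left 0. q i \<le> q l"
        by (rule eventually_at_leftI[of l 0]) (use mono neg in auto)
    qed simp
    moreover have "exp l - 1 < 0" using neg by simp
    ultimately have "q l * (exp l - 1) \<le> E n Z * (exp l - 1)" by (metis less_imp_le mult_right_mono_neg)
    then show ?thesis unfolding q_def using \<open>exp l - 1 < 0\<close> by simp
  qed
qed

lemma herbst:
  "ln (E n (\<lambda>x. exp (l * (Z x - E n Z)))) \<le> E n Z * (exp l - l - 1)"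
proof -
  have "E n (\<lambda>x. exp (l * (Z x - E n Z))) = E n (\<lambda>x. exp (- (l * E n Z)) * exp (l * Z x))"
    by (rule E_cong) (simp add: exp_add[symmetric] algebra_simps)
  also have "\<dots> = exp (- (l * E n Z)) * F l" unfolding E_cmult F_def ..
  finally have "ln (E n (\<lambda>x. exp (l * (Z x - E n Z)))) = - (l * E n Z) + ln (F l)"
    using F_pos[of l] by (simp add: ln_mult)
  then show ?thesis using herbst_L[of l] by (simp add: algebra_simps)
qed

end

context sbf begin

lemma mu_nonneg: "0 \<le> E n Z" by (rule E_nonneg) (rule Z_nonneg)

lemma G_bound: "E n (\<lambda>x. exp (l * (Z x - E n Z))) \<le> exp (E n Z * (exp l - l - 1))"
proof -
  have pos: "0 < E n (\<lambda>x. exp (l * (Z x - E n Z)))" by (rule E_pos) simp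
  have "E n (\<lambda>x. exp (l * (Z x - E n Z))) = exp (ln (E n (\<lambda>x. exp (l * (Z x - E n Z)))))"
    using pos by simp
  also have "\<dots> \<le> exp (E n Z * (exp l - l - 1))" using herbst[of l] by simp
  finally show ?thesis .
qed

lemma chernoff_up:
  assumes "0 \<le> l"
  shows "E n (\<lambda>x. if t \<le> Z x - E n Z then 1 else 0) \<le> exp (E n Z * (exp l - l - 1) - l * t)"
proof -
  have "E n (\<lambda>x. if t \<le> Z x - E n Z then 1 else 0) \<le> E n (\<lambda>x. exp (- (l * t)) * exp (l * (Z x - E n Z)))"
  proof (rule E_mono)
    fix x :: "nat \<Rightarrow> nat"
    have "exp (- (l * t)) * exp (l * (Z x - E n Z)) = exp (l * (Z x - E n Z - t))"
      by (simp add: exp_add[symmetric] algebra_simps)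
    moreover have "t \<le> Z x - E n Z \<Longrightarrow> 1 \<le> exp (l * (Z x - E n Z - t))"
      using assms by simp
    ultimately show "(if t \<le> Z x - E n Z then 1 else 0) \<le> exp (- (l * t)) * exp (l * (Z x - E n Z))"
      by auto
  qed
  also have "\<dots> = exp (- (l * t)) * E n (\<lambda>x. exp (l * (Z x - E n Z)))" by (rule E_cmult)
  also have "\<dots> \<le> exp (- (l * t)) * exp (E n Z * (exp l - l - 1))"
    by (rule mult_left_mono[OF G_bound]) simp
  also have "\<dots> = exp (E n Z * (exp l - l - 1) - l * t)" by (simp add: exp_add[symmetric])
  finally show ?thesis .
qed

lemma chernoff_low:
  assumes "0 \<le> s"
  shows "E n (\<lambda>x. if Z x - E n Z \<le> - t then 1 else 0) \<le> exp (E n Z * (exp (-s) + s - 1) - s * t)"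
proof -
  have "E n (\<lambda>x. if Z x - E n Z \<le> - t then 1 else 0) \<le> E n (\<lambda>x. exp (- (s * t)) * exp ((-s) * (Z x - E n Z)))"
  proof (rule E_mono)
    fix x :: "nat \<Rightarrow> nat"
    have "exp (- (s * t)) * exp ((-s) * (Z x - E n Z)) = exp (s * (- (Z x - E n Z) - t))"
      by (simp add: exp_add[symmetric] algebra_simps)
    moreover have "Z x - E n Z \<le> - t \<Longrightarrow> 1 \<le> exp (s * (- (Z x - E n Z) - t))"
      using assms by simp
    ultimately show "(if Z x - E n Z \<le> - t then 1 else 0) \<le> exp (- (s * t)) * exp ((-s) * (Z x - E n Z))"
      by auto
  qed
  also have "\<dots> = exp (- (s * t)) * E n (\<lambda>x. exp ((-s) * (Z x - E n Z)))" by (rule E_cmult)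
  also have "\<dots> \<le> exp (- (s * t)) * exp (E n Z * (exp (-s) - (-s) - 1))"
    by (rule mult_left_mono[OF G_bound]) simp
  also have "\<dots> = exp (E n Z * (exp (-s) + s - 1) - s * t)" by (simp add: exp_add[symmetric])
  finally show ?thesis .
qed

lemma tail_upper:
  assumes t: "0 < t"
  shows "E n (\<lambda>x. if t \<le> Z x - E n Z then 1 else 0) \<le> exp (- (t\<^sup>2 / (2 * (E n Z + t / 3))))"
proof (cases "E n Z = 0")
  case True
  have "E n (\<lambda>x. if t \<le> Z x - E n Z then 1 else 0) \<le> exp (E n Z * (exp 3 - 3 - 1) - 3 * t)"
    by (rule chernoff_up) simp
  also have "\<dots> \<le> exp (- (t\<^sup>2 / (2 * (E n Z + t / 3))))"
    using True t by (simp add: power2_eq_square field_simps)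
  finally show ?thesis .
next
  case False
  define \<mu> where "\<mu> = E n Z"
  have mu: "0 < \<mu>" using False mu_nonneg unfolding \<mu>_def by simp
  define D where "D = \<mu> + t / 3"
  have D: "0 < D" using mu t unfolding D_def by simp
  define l where "l = t / D"
  have l0: "0 \<le> l" using t D unfolding l_def by simp
  have l3: "l < 3" using t D mu unfolding l_def D_def by (simp add: field_simps)
  have e1: "1 - l / 3 = \<mu> / D" using D unfolding l_def D_def by (simp add: field_simps)
  have "E n (\<lambda>x. if t \<le> Z x - E n Z then 1 else 0) \<le> exp (\<mu> * (exp l - l - 1) - l * t)"
    unfolding \<mu>_def by (rule chernoff_up[OF l0])
  also have "\<dots> \<le> exp (\<mu> * (l\<^sup>2 / (2 * (1 - l / 3))) - l * t)"
  proof -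
    have "\<mu> * (exp l - l - 1) \<le> \<mu> * (l\<^sup>2 / (2 * (1 - l / 3)))"
      using phi_upper[OF l0 l3] mu by (intro mult_left_mono) auto
    then show ?thesis by simp
  qed
  also have "\<mu> * (l\<^sup>2 / (2 * (1 - l / 3))) - l * t = - (t\<^sup>2 / (2 * D))"
    unfolding e1 using mu D unfolding l_def by (simp add: field_simps power2_eq_square)
  finally show ?thesis unfolding D_def \<mu>_def .
qed

lemma tail_lower:
  assumes t: "0 < t"
  shows "E n (\<lambda>x. if Z x - E n Z \<le> - t then 1 else 0) \<le> exp (- (t\<^sup>2 / (2 * E n Z)))"
proof (cases "E n Z = 0")
  case True
  have "E n (\<lambda>x. if Z x - E n Z \<le> - t then 1 else 0) \<le> E n (\<lambda>x. 1)"
    by (rule E_mono) simp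
  then show ?thesis using True by (simp add: E_const)
next
  case False
  define \<mu> where "\<mu> = E n Z"
  have mu: "0 < \<mu>" using False mu_nonneg unfolding \<mu>_def by simp
  define s where "s = t / \<mu>"
  have s0: "0 \<le> s" using t mu unfolding s_def by simp
  have "E n (\<lambda>x. if Z x - E n Z \<le> - t then 1 else 0) \<le> exp (\<mu> * (exp (-s) + s - 1) - s * t)"
    unfolding \<mu>_def by (rule chernoff_low[OF s0])
  also have "\<dots> \<le> exp (\<mu> * (s\<^sup>2 / 2) - s * t)"
  proof -
    have "\<mu> * (exp (-s) + s - 1) \<le> \<mu> * (s\<^sup>2 / 2)"
      using phi_lower[OF s0] mu by (intro mult_left_mono) auto
    then show ?thesis by simp
  qed
  also have "\<mu> * (s\<^sup>2 / 2) - s * t = - (t\<^sup>2 / (2 * \<mu>))"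
    using mu unfolding s_def by (simp add: field_simps power2_eq_square)
  finally show ?thesis unfolding \<mu>_def .
qed

end

context pm begin

lemma E_PiE: "E n f = (\<Sum>x\<in>PiE {..<n} (\<lambda>_. S). (\<Prod>i<n. p i (x i)) * f x)"
proof (induction n arbitrary: f)
  case 0 show ?case by simp
next
  case (Suc n)
  let ?P = "PiE {..<n} (\<lambda>_. S)"
  have eqP: "PiE {..<Suc n} (\<lambda>_. S) = (\<lambda>(y, g). g(n := y)) ` (S \<times> ?P)"
    using PiE_insert_eq[of n "{..<n}" "\<lambda>_. S"] by (simp add: lessThan_Suc)
  have inj: "inj_on (\<lambda>(y, g). g(n := y)) (S \<times> ?P)" by (rule inj_combinator) simp
  have pr: "(\<Prod>i<Suc n. p i ((y(n:=v)) i)) = p n v * (\<Prod>i<n. p i (y i))" for v y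
  proof -
    have "(\<Prod>i<n. p i ((y(n:=v)) i)) = (\<Prod>i<n. p i (y i))" by (rule prod.cong) auto
    then show ?thesis by (simp add: prod.lessThan_Suc)
  qed
  have "(\<Sum>x\<in>PiE {..<Suc n} (\<lambda>_. S). (\<Prod>i<Suc n. p i (x i)) * f x)
      = (\<Sum>z\<in>S \<times> ?P. (\<Prod>i<Suc n. p i (((snd z)(n:=fst z)) i)) * f ((snd z)(n:=fst z)))"
    unfolding eqP sum.reindex[OF inj] by (rule sum.cong) (auto simp: split_beta)
  also have "\<dots> = (\<Sum>v\<in>S. \<Sum>y\<in>?P. (\<Prod>i<Suc n. p i ((y(n:=v)) i)) * f (y(n:=v)))"
    by (simp add: sum.cartesian_product')
  also have "\<dots> = (\<Sum>v\<in>S. p n v * (\<Sum>y\<in>?P. (\<Prod>i<n. p i (y i)) * f (y(n:=v))))"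
    unfolding pr by (simp add: sum_distrib_left mult.assoc)
  also have "\<dots> = E (Suc n) f" by (simp add: Suc.IH)
  finally show ?case by simp
qed

end

lemma Mn_trunc:
  assumes "\<forall>j<n. y j = min (x j) (Suc n)"
  shows "Mn_fun n y = Mn_fun n x"
proof -
  have c: "cnt n y k = cnt n x k" if "k \<le> n" for k
  proof -
    have "{j. j < n \<and> k < y j} = {j. j < n \<and> k < x j}" using assms that by auto
    then show ?thesis unfolding cnt_def by simp
  qed
  have "Dset n y = Dset n x" unfolding Dset_def using c by auto
  then show ?thesis unfolding Mn_alt by simp
qed

theorem lemma7:
  fixes M :: "'a measure" and X :: "nat \<Rightarrow> 'a \<Rightarrow> nat" and n :: nat
  assumes "prob_space M"
    and rv: "\<And>i. i < n \<Longrightarrow> X i \<in> measurable M (count_space UNIV)"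
    and indep: "prob_space.indep_vars M (\<lambda>_. count_space UNIV) X {..<n}"
    and ident: "\<And>i. i < n \<Longrightarrow> distr M (count_space UNIV) (X i) = distr M (count_space UNIV) (X 0)"
    and pos: "\<And>i \<omega>. i < n \<Longrightarrow> \<omega> \<in> space M \<Longrightarrow> X i \<omega> \<ge> 1"
  defines "Z \<equiv> (\<lambda>\<omega>. real (Mn_fun n (\<lambda>i. X i \<omega>)))"
  defines "EZ \<equiv> prob_space.expectation M Z"
  shows "self_bounded n {1..} (\<lambda>x. real (Mn_fun n x))
    \<and> prob_space.variance M Z \<le> EZ
    \<and> (\<forall>l::real. ln (prob_space.expectation M (\<lambda>\<omega>. exp (l * (Z \<omega> - EZ)))) \<le> EZ * (exp l - l - 1))
    \<and> (\<forall>t>0. measure M {\<omega> \<in> space M. Z \<omega> - EZ \<ge> t} \<le> exp (- (t\<^sup>2 / (2 * (EZ + t / 3)))))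
    \<and> (\<forall>t>0. measure M {\<omega> \<in> space M. Z \<omega> - EZ \<le> - t} \<le> exp (- (t\<^sup>2 / (2 * EZ))))"
proof -
  interpret P: prob_space M by fact
  define N where "N = Suc n"
  define S where "S = {1..N}"
  define p where "p i v = (if i < n then measure M {\<omega> \<in> space M. min (X i \<omega>) N = v} else (if v = 1 then 1 else 0))" for i v
  define Yv where "Yv \<omega> = (\<lambda>i. if i < n then min (X i \<omega>) N else undefined)" for \<omega>
  define Zf where "Zf x = real (Mn_fun n x)" for x
  define W where "W i x = real (Mn_fun n (x(i:=1)))" for i x
  let ?P = "PiE {..<n} (\<lambda>_. S)"
  have eqI1: "space M \<inter> {\<omega> \<in> space M. Q \<omega>} = {\<omega> \<in> space M. Q \<omega>}" for Q by auto
  have eqI2: "{\<omega> \<in> space M. Q \<omega>} \<inter> space M = {\<omega> \<in> space M. Q \<omega>}" for Q by auto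
  have finS: "finite S" unfolding S_def by simp
  have finP: "finite ?P" using finS by (simp add: finite_PiE)
  have Yv_in: "Yv \<omega> \<in> ?P" if "\<omega> \<in> space M" for \<omega>
    using pos[OF _ that] unfolding Yv_def S_def N_def by (auto simp: PiE_def extensional_def)
  have Z_eq: "Z \<omega> = Zf (Yv \<omega>)" for \<omega>
    unfolding Z_def Zf_def Yv_def N_def by (subst Mn_trunc[of n _ "\<lambda>i. X i \<omega>"]) auto
  have Xset: "{\<omega> \<in> space M. min (X i \<omega>) N = v} = X i -` {k. min k N = v} \<inter> space M" for i v
    by auto
  have Xmeas: "{\<omega> \<in> space M. min (X i \<omega>) N = v} \<in> sets M" if "i < n" for i v
    unfolding Xset using measurable_sets[OF rv[OF that], of "{k. min k N = v}"] by simp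
  have Yset: "{\<omega> \<in> space M. Yv \<omega> = x} = space M \<inter> (\<Inter>i\<in>{..<n}. {\<omega> \<in> space M. min (X i \<omega>) N = x i})"
    if "x \<in> ?P" for x
  proof -
    have "Yv \<omega> = x \<longleftrightarrow> (\<forall>i<n. min (X i \<omega>) N = x i)" for \<omega>
    proof
      assume "Yv \<omega> = x" then show "\<forall>i<n. min (X i \<omega>) N = x i" unfolding Yv_def by (auto dest: fun_cong)
    next
      assume h: "\<forall>i<n. min (X i \<omega>) N = x i"
      show "Yv \<omega> = x"
      proof
        fix i show "Yv \<omega> i = x i" using h that unfolding Yv_def by (cases "i < n") (auto simp: PiE_def extensional_def)
      qed
    qed
    then show ?thesis by auto
  qed
  have Ymeas: "{\<omega> \<in> space M. Yv \<omega> = x} \<in> sets M" if "x \<in> ?P" for x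
    unfolding Yset[OF that] using Xmeas by auto
  have probY: "measure M {\<omega> \<in> space M. Yv \<omega> = x} = (\<Prod>i<n. p i (x i))" if x: "x \<in> ?P" for x
  proof (cases "n = 0")
    case True
    then show ?thesis unfolding Yset[OF x] using P.prob_space by simp
  next
    case False
    have "measure M {\<omega> \<in> space M. Yv \<omega> = x} = measure M (\<Inter>i\<in>{..<n}. X i -` {k. min k N = x i} \<inter> space M)"
      unfolding Yset[OF x] Xset using False by (auto intro!: arg_cong[where f="measure M"])
    also have "\<dots> = (\<Prod>i\<in>{..<n}. measure M (X i -` {k. min k N = x i} \<inter> space M))"
      by (rule P.indep_varsD_finite[OF indep]) (use False in auto)
    also have "\<dots> = (\<Prod>i<n. p i (x i))" unfolding p_def Xset[symmetric] by (rule prod.cong) auto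
    finally show ?thesis .
  qed
  have T2: "P.expectation (\<lambda>\<omega>. H (Yv \<omega>)) = (\<Sum>x\<in>?P. H x * measure M {\<omega> \<in> space M. Yv \<omega> = x})" for H :: "(nat \<Rightarrow> nat) \<Rightarrow> real"
  proof -
    have "P.expectation (\<lambda>\<omega>. H (Yv \<omega>)) = P.expectation (\<lambda>\<omega>. \<Sum>x\<in>?P. H x * indicator {\<omega> \<in> space M. Yv \<omega> = x} \<omega>)"
    proof (rule Bochner_Integration.integral_cong[OF refl])
      fix \<omega> assume w: "\<omega> \<in> space M"
      have "(\<Sum>x\<in>?P. H x * indicator {\<omega> \<in> space M. Yv \<omega> = x} \<omega>) = (\<Sum>x\<in>?P. if Yv \<omega> = x then H x else 0)"
        by (rule sum.cong) (auto simp: indicator_def w)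
      also have "\<dots> = H (Yv \<omega>)" using finP Yv_in[OF w] by (simp add: sum.delta)
      finally show "H (Yv \<omega>) = (\<Sum>x\<in>?P. H x * indicator {\<omega> \<in> space M. Yv \<omega> = x} \<omega>)" by simp
    qed
    also have "\<dots> = (\<Sum>x\<in>?P. P.expectation (\<lambda>\<omega>. H x * indicator {\<omega> \<in> space M. Yv \<omega> = x} \<omega>))"
    proof (rule Bochner_Integration.integral_sum)
      fix x assume "x \<in> ?P"
      then have "integrable M (indicator {\<omega> \<in> space M. Yv \<omega> = x} :: 'a \<Rightarrow> real)"
        using Ymeas by (intro integrable_real_indicator) (auto simp: top.not_eq_extremum[symmetric])
      then show "integrable M (\<lambda>\<omega>. H x * indicator {\<omega> \<in> space M. Yv \<omega> = x} \<omega>)" by simp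
    qed
    also have "\<dots> = (\<Sum>x\<in>?P. H x * measure M {\<omega> \<in> space M. Yv \<omega> = x})"
    proof (rule sum.cong[OF refl])
      fix x assume "x \<in> ?P"
      then have "integrable M (indicator {\<omega> \<in> space M. Yv \<omega> = x} :: 'a \<Rightarrow> real)"
        using Ymeas by (intro integrable_real_indicator) (auto simp: top.not_eq_extremum[symmetric])
      then show "P.expectation (\<lambda>\<omega>. H x * indicator {\<omega> \<in> space M. Yv \<omega> = x} \<omega>) = H x * measure M {\<omega> \<in> space M. Yv \<omega> = x}"
        by (simp add: eqI1 eqI2)
    qed
    finally show ?thesis .
  qed
  have pmI: "pm p S"
  proof
    show "finite S" by (rule finS)
    fix i v assume "v \<in> S" then show "0 \<le> p i v" unfolding p_def by auto
  next
    fix i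
    show "(\<Sum>v\<in>S. p i v) = 1"
    proof (cases "i < n")
      case False
      have "(\<Sum>v\<in>S. p i v) = (\<Sum>v\<in>S. if v = 1 then 1 else 0)" unfolding p_def using False by simp
      also have "\<dots> = 1" using finS unfolding S_def N_def by (simp add: sum.delta')
      finally show ?thesis .
    next
      case True
      have "(\<Sum>v\<in>S. p i v) = (\<Sum>v\<in>S. measure M {\<omega> \<in> space M. min (X i \<omega>) N = v})"
        unfolding p_def using True by simp
      also have "\<dots> = measure M (\<Union>v\<in>S. {\<omega> \<in> space M. min (X i \<omega>) N = v})"
        by (rule P.finite_measure_finite_Union[symmetric]) (use finS Xmeas[OF True] in \<open>auto simp: disjoint_family_on_def\<close>)
      also have "(\<Union>v\<in>S. {\<omega> \<in> space M. min (X i \<omega>) N = v}) = space M"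
        using pos[OF True] unfolding S_def N_def by auto
      finally show ?thesis using P.prob_space by simp
    qed
  qed
  interpret R: pm p S by (rule pmI)
  have transfer: "P.expectation (\<lambda>\<omega>. g (Z \<omega>)) = R.E n (\<lambda>x. g (Zf x))" for g :: "real \<Rightarrow> real"
  proof -
    have "P.expectation (\<lambda>\<omega>. g (Z \<omega>)) = P.expectation (\<lambda>\<omega>. g (Zf (Yv \<omega>)))" by (simp add: Z_eq)
    also have "\<dots> = (\<Sum>x\<in>?P. g (Zf x) * measure M {\<omega> \<in> space M. Yv \<omega> = x})" by (rule T2)
    also have "\<dots> = (\<Sum>x\<in>?P. (\<Prod>i<n. p i (x i)) * g (Zf x))" by (rule sum.cong) (auto simp: probY)
    also have "\<dots> = R.E n (\<lambda>x. g (Zf x))" by (rule R.E_PiE[symmetric])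
    finally show ?thesis .
  qed
  interpret Q: sbf p S n Zf W
  proof unfold_locales
    fix x i assume "i < n"
    then show "0 \<le> Zf x - W i x \<and> Zf x - W i x \<le> 1" unfolding Zf_def W_def using Mn_upd[of i n x] by auto
  next
    fix x show "(\<Sum>i<n. Zf x - W i x) \<le> Zf x" unfolding Zf_def W_def by (rule Mn_sb_real)
  next
    fix i x v show "W i (x(i := v)) = W i x" unfolding W_def by simp
  qed
  have EZ: "EZ = R.E n Zf" unfolding EZ_def using transfer[of "\<lambda>z. z"] by simp
  have meas_eq: "measure M {\<omega> \<in> space M. Q \<omega>} = P.expectation (\<lambda>\<omega>. if Q \<omega> then 1 else 0)" for Q
  proof -
    have "P.expectation (\<lambda>\<omega>. if Q \<omega> then 1 else 0) = P.expectation (indicator {\<omega> \<in> space M. Q \<omega>})"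
      by (rule Bochner_Integration.integral_cong) (auto simp: indicator_def)
    also have "\<dots> = measure M {\<omega> \<in> space M. Q \<omega>}" by (simp add: eqI1 eqI2)
    finally show ?thesis by simp
  qed
  have i: "self_bounded n {1..} (\<lambda>x. real (Mn_fun n x))" by (rule part_i)
  have ii: "P.variance Z \<le> EZ"
  proof -
    have "P.variance Z = P.expectation (\<lambda>\<omega>. (Z \<omega> - EZ)\<^sup>2)" by (simp add: EZ_def)
    also have "\<dots> = R.E n (\<lambda>x. (Zf x - R.E n Zf)\<^sup>2)" using transfer[of "\<lambda>z. (z - EZ)\<^sup>2"] unfolding EZ .
    also have "\<dots> \<le> EZ" unfolding EZ by (rule Q.var_bound)
    finally show ?thesis .
  qed
  have iii: "ln (P.expectation (\<lambda>\<omega>. exp (l * (Z \<omega> - EZ)))) \<le> EZ * (exp l - l - 1)" for l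
    using transfer[of "\<lambda>z. exp (l * (z - EZ))"] Q.herbst[of l] unfolding EZ by simp
  have iv: "measure M {\<omega> \<in> space M. Z \<omega> - EZ \<ge> t} \<le> exp (- (t\<^sup>2 / (2 * (EZ + t / 3))))" if "0 < t" for t
    unfolding meas_eq using transfer[of "\<lambda>z. if t \<le> z - EZ then 1 else 0"] Q.tail_upper[OF that]
    unfolding EZ by simp
  have v: "measure M {\<omega> \<in> space M. Z \<omega> - EZ \<le> - t} \<le> exp (- (t\<^sup>2 / (2 * EZ)))" if "0 < t" for t
    unfolding meas_eq using transfer[of "\<lambda>z. if z - EZ \<le> - t then 1 else 0"] Q.tail_lower[OF that]
    unfolding EZ by simp
  show ?thesis using i ii iii iv v by blast
qed


end
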